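(* Let $\{X_i\}_{i\ge1}$ be independent, identically distributed random variables on $((0,1),\mathcal{B},\mathcal{L})$, each exponentially distributed with rate $1$. For $t\ge1$ let $[t]_E=2k$ if $2k-1\le t<2k+1$, $k\in\mathbb{N}$. Define $D_1=[\exp(X_1)]_E$ and $D_{n+1}=\left[\frac{(D_n-1)(D_n+1)}{D_n}\exp(X_{n+1})\right]_E$. Then $$\mathcal{L}\left(\{x\in(0,1)\colon D_{n+1}(x)=D_n(x)\text{ for infinitely many }n\}\right)=0.$$
   Context: $\mathcal{B}$ denotes the Borel $\sigma$-algebra of $(0,1)$ and $\mathcal{L}$ Lebesgue measure. *)

theory Defs
  imports "HOL-Probability.Probability"
begin

definition unitM :: "real measure" where
  "unitM = restrict_space lborel {0<..<1}"

definition evround :: "real \<Rightarrow> real" where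
  "evround t = 2 * of_int \<lfloor>(t + 1) / 2\<rfloor>"

text \<open>Digits D_n, n \<ge> 1 (D 0 is an unused dummy value).\<close>
fun digD :: "(nat \<Rightarrow> real \<Rightarrow> real) \<Rightarrow> nat \<Rightarrow> real \<Rightarrow> real" where
  "digD X 0 x = 0"
| "digD X (Suc 0) x = evround (exp (X 1 x))"
| "digD X (Suc (Suc n)) x =
     (let d = digD X (Suc n) x in evround ((d - 1) * (d + 1) / d * exp (X (Suc (Suc n)) x)))"

end

theory Submission
  imports Defs
begin

lemma evround_gt: "t - 1 < evround t"
proof -
  have "(t + 1) / 2 < of_int \<lfloor>(t + 1) / 2\<rfloor> + 1" using floor_correct[of "(t+1)/2"] by simp
  then have "t + 1 < 2 * of_int \<lfloor>(t + 1) / 2\<rfloor> + 2" by (simp add: field_simps)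
  then show ?thesis unfolding evround_def by linarith
qed

lemma evround_ge:
  assumes "d = 2 * of_int k" "d - 1 \<le> t"
  shows "d \<le> evround t"
proof -
  have "k \<le> \<lfloor>(t + 1) / 2\<rfloor>" using assms by (subst le_floor_iff) simp
  then show ?thesis unfolding evround_def using assms(1) by simp
qed

lemma D_facts:
  assumes pos: "\<And>i. 0 \<le> X (Suc i) x"
  shows "digD X (Suc n) x \<ge> 2 \<and> (\<exists>k. digD X (Suc n) x = 2 * of_int k)"
proof (induction n)
  case 0
  have "1 \<le> exp (X 1 x)" using pos[of 0] by simp
  then have "2 \<le> evround (exp (X 1 x))" by (intro evround_ge[where k=1]) auto
  then show ?case by (auto simp: evround_def)
next
  case (Suc n)
  define d where "d = digD X (Suc n) x"
  have d2: "d \<ge> 2" and "\<exists>k. d = 2 * of_int k" using Suc d_def by auto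
  then obtain k where k: "d = 2 * of_int k" by auto
  have "1 \<le> exp (X (Suc (Suc n)) x)" using pos[of "Suc n"] by simp
  have a: "d - 1 \<le> (d - 1) * (d + 1) / d" using d2 by (simp add: field_simps)
  have "(d - 1) * (d + 1) / d \<le> (d - 1) * (d + 1) / d * exp (X (Suc (Suc n)) x)"
  proof -
    have "0 \<le> (d - 1) * (d + 1) / d" using d2 by simp
    then have "(d - 1) * (d + 1) / d * 1 \<le> (d - 1) * (d + 1) / d * exp (X (Suc (Suc n)) x)"
      using \<open>1 \<le> _\<close> by (intro mult_left_mono) auto
    then show ?thesis by simp
  qed
  then have "d \<le> evround ((d - 1) * (d + 1) / d * exp (X (Suc (Suc n)) x))"
    using a by (intro evround_ge[OF k]) linarith
  then have "2 \<le> digD X (Suc (Suc n)) x" using d2 by (simp add: d_def Let_def)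
  moreover have "\<exists>k. digD X (Suc (Suc n)) x = 2 * of_int k" by (simp add: Let_def evround_def)
  ultimately show ?case by blast
qed

lemma D_mono:
  assumes pos: "\<And>i. 0 \<le> X (Suc i) x"
  shows "digD X (Suc n) x \<le> digD X (Suc (Suc n)) x"
proof -
  define d where "d = digD X (Suc n) x"
  have d2: "d \<ge> 2" and "\<exists>k. d = 2 * of_int k" using D_facts[where X=X and x=x, OF pos] d_def by auto
  then obtain k where k: "d = 2 * of_int k" by auto
  have "1 \<le> exp (X (Suc (Suc n)) x)" using pos[of "Suc n"] by simp
  have a: "d - 1 \<le> (d - 1) * (d + 1) / d" using d2 by (simp add: field_simps)
  have "(d - 1) * (d + 1) / d \<le> (d - 1) * (d + 1) / d * exp (X (Suc (Suc n)) x)"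
  proof -
    have "0 \<le> (d - 1) * (d + 1) / d" using d2 by simp
    then have "(d - 1) * (d + 1) / d * 1 \<le> (d - 1) * (d + 1) / d * exp (X (Suc (Suc n)) x)"
      using \<open>1 \<le> _\<close> by (intro mult_left_mono) auto
    then show ?thesis by simp
  qed
  then have "d \<le> evround ((d - 1) * (d + 1) / d * exp (X (Suc (Suc n)) x))"
    using a by (intro evround_ge[OF k]) linarith
  then show ?thesis by (simp add: d_def Let_def)
qed

definition gfun :: "real \<Rightarrow> real" where
  "gfun y = (if ln 8 < y then 1/2 else 1)"

lemma D_prod:
  assumes pos: "\<And>i. 0 \<le> X (Suc i) x"
  shows "2 / digD X (Suc n) x \<le> (\<Prod>i\<in>{2..Suc n}. gfun (X i x))"
proof (induction n)
  case 0
  have "digD X (Suc 0) x \<ge> 2" using D_facts[where X=X and x=x and n=0, OF pos] by simp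
  then show ?case by simp
next
  case (Suc n)
  define d where "d = digD X (Suc n) x"
  define d' where "d' = digD X (Suc (Suc n)) x"
  define y where "y = X (Suc (Suc n)) x"
  have d2: "d \<ge> 2" using D_facts[where X=X and x=x, OF pos] d_def by auto
  have mono: "d \<le> d'" using D_mono[where X=X and x=x, OF pos] d_def d'_def by auto
  have IH: "2 / d \<le> (\<Prod>i\<in>{2..Suc n}. gfun (X i x))" using Suc d_def by simp
  have eq: "{2..Suc (Suc n)} = insert (Suc (Suc n)) {2..Suc n}" by auto
  have P: "(\<Prod>i\<in>{2..Suc (Suc n)}. gfun (X i x)) = gfun y * (\<Prod>i\<in>{2..Suc n}. gfun (X i x))"
    unfolding eq y_def by (subst prod.insert) auto
  define Pn where "Pn = (\<Prod>i\<in>{2..Suc n}. gfun (X i x))"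
  have "2 / d' \<le> gfun y * Pn"
  proof (cases "ln 8 < y")
    case False
    have "2 / d' \<le> 2 / d" using mono d2 by (intro divide_left_mono) auto
    then show ?thesis using IH False unfolding gfun_def Pn_def by simp
  next
    case True
    have "exp (ln 8) < exp y" using True by (subst exp_less_cancel_iff)
    then have e8: "8 < exp y" by simp
    have "d' = evround ((d - 1) * (d + 1) / d * exp y)" by (simp add: d'_def d_def y_def Let_def)
    then have "(d - 1) * (d + 1) / d * exp y - 1 < d'" using evround_gt by simp
    moreover have "(d - 1) * (d + 1) / d * 8 \<le> (d - 1) * (d + 1) / d * exp y"
      using e8 d2 by (intro mult_left_mono) auto
    moreover have "2 * d \<le> (d - 1) * (d + 1) / d * 8 - 1"
    proof -
      have "2 * d \<le> d * d" using d2 by (intro mult_right_mono) auto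
      then have h2: "d + 8 \<le> d * (d * 6)" using d2 by linarith
      show ?thesis using d2 h2 by (simp add: field_simps)
    qed
    ultimately have "2 * d \<le> d'" by linarith
    then have "2 / d' \<le> 1 / d" using d2 by (simp add: field_simps)
    then show ?thesis using IH True unfolding gfun_def Pn_def by simp
  qed
  then show ?case unfolding d'_def P Pn_def .
qed

lemma D_eq:
  assumes pos: "\<And>i. 0 \<le> X (Suc i) x"
    and eq: "digD X (Suc (Suc n)) x = digD X (Suc n) x"
  shows "X (Suc (Suc n)) x < 2 / digD X (Suc n) x"
proof -
  define d where "d = digD X (Suc n) x"
  define y where "y = X (Suc (Suc n)) x"
  have d2: "d \<ge> 2" using D_facts[where X=X and x=x, OF pos] d_def by auto
  have "d = evround ((d - 1) * (d + 1) / d * exp y)" using eq by (simp add: d_def y_def Let_def)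
  then have "(d - 1) * (d + 1) / d * exp y - 1 < d" using evround_gt by metis
  then have "(d - 1) * (d + 1) / d * exp y < d + 1" by linarith
  then have "(d - 1) * (d + 1) * exp y < (d + 1) * d" using d2 by (simp add: field_simps)
  then have "(d + 1) * ((d - 1) * exp y) < (d + 1) * d" by (simp add: algebra_simps)
  then have "(d - 1) * exp y < d" using d2 by (subst (asm) mult_less_cancel_left_pos) auto
  then have "exp y < d / (d - 1)" using d2 by (simp add: field_simps)
  then have "y < ln (d / (d - 1))" using ln_less_cancel_iff[of "exp y" "d/(d-1)"] d2 by simp
  also have "\<dots> \<le> d / (d - 1) - 1" using d2 by (intro ln_le_minus_one) auto
  also have "\<dots> \<le> 2 / d" using d2 by (simp add: field_simps)
  finally show ?thesis by (simp add: y_def d_def)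
qed


lemma evround_meas[measurable]: "evround \<in> borel_measurable borel"
  unfolding evround_def by measurable

lemma gfun_meas[measurable]: "gfun \<in> borel_measurable borel"
  unfolding gfun_def by measurable

lemma digD_meas:
  assumes [measurable]: "\<And>i. X (Suc i) \<in> borel_measurable M"
  shows "digD X (Suc n) \<in> borel_measurable M"
proof (induction n)
  case 0
  have [measurable]: "X 1 \<in> borel_measurable M" using assms[of 0] by simp
  show ?case by simp
next
  case (Suc n)
  note Suc[measurable]
  show ?case by (simp add: Let_def)
qed

theorem lemma3p2:
  fixes X :: "nat \<Rightarrow> real \<Rightarrow> real"
  assumes "prob_space.indep_vars unitM (\<lambda>_. borel) X {1..}"
    and "\<And>i. i \<ge> 1 \<Longrightarrow> distributed unitM lborel (X i) (exponential_density 1)"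
  shows "{x \<in> space unitM. \<exists>\<^sub>\<infinity>n. n \<ge> 1 \<and> digD X (Suc n) x = digD X n x} \<in> sets unitM
    \<and> emeasure unitM {x \<in> space unitM. \<exists>\<^sub>\<infinity>n. n \<ge> 1 \<and> digD X (Suc n) x = digD X n x} = 0"
proof -
  interpret P: prob_space unitM
    unfolding unitM_def by (rule prob_space_restrict_space) auto
  have indep: "P.indep_vars (\<lambda>_. borel) X {1..}" using assms(1) .
  have distr: "distributed unitM lborel (X (Suc i)) (exponential_density 1)" for i
    using assms(2)[of "Suc i"] by simp
  have Xm[measurable]: "X (Suc i) \<in> borel_measurable unitM" for i
    using distributed_measurable[OF distr[of i]] by simp
  have Dm[measurable]: "digD X (Suc n) \<in> borel_measurable unitM" for n
    by (rule digD_meas) (rule Xm)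
  have e0: "digD X 0 = (\<lambda>_. 0)" by (rule ext) simp
  have Dm0[measurable]: "digD X 0 \<in> borel_measurable unitM" by (simp add: e0)
  have Dm'[measurable]: "digD X n \<in> borel_measurable unitM" for n
    by (cases n) (simp_all only: Dm Dm0)
  define S where "S = {x \<in> space unitM. \<exists>\<^sub>\<infinity>n. n \<ge> 1 \<and> digD X (Suc n) x = digD X n x}"
  have S_meas: "S \<in> sets unitM"
    unfolding S_def INFM_nat by measurable
  define r :: real where "r = 31/32"
  define B where "B m = {x \<in> space unitM. X (Suc (Suc m)) x \<le> r ^ m}" for m
  define Pr where "Pr n x = (\<Prod>i\<in>{2..n}. gfun (X i x))" for n x
  define C where "C m = {x \<in> space unitM. r ^ m \<le> Pr (Suc m) x}" for m
  have Prm[measurable]: "Pr (Suc m) \<in> borel_measurable unitM" for m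
  proof -
    have "(\<lambda>x. gfun (X i x)) \<in> borel_measurable unitM" if "i \<in> {2..Suc m}" for i
    proof -
      have "i = Suc (i - 1)" using that by auto
      then obtain j where j: "i = Suc j" by blast
      show ?thesis unfolding j by measurable
    qed
    then show ?thesis unfolding Pr_def by (intro borel_measurable_prod) auto
  qed
  have B_sets[measurable]: "B m \<in> sets unitM" for m unfolding B_def by measurable
  have C_sets[measurable]: "C m \<in> sets unitM" for m unfolding C_def by measurable
  have B_le: "measure unitM (B m) \<le> r ^ m" for m
  proof -
    have "measure unitM (B m) = 1 - exp (- (r ^ m) * 1)"
      unfolding B_def using P.exponential_distributedD_le[OF distr[of "Suc m"], of "r ^ m"]
      by (simp add: r_def)
    also have "\<dots> \<le> r ^ m" using exp_ge_add_one_self[of "- (r ^ m)"] by simp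
    finally show ?thesis .
  qed
  have gm: "(\<lambda>x. gfun (X i x)) \<in> borel_measurable unitM" if "i \<in> {2..Suc m}" for i m
  proof -
    have "i = Suc (i - 1)" using that by auto
    then obtain j where j: "i = Suc j" by blast
    show ?thesis unfolding j by measurable
  qed
  have intg: "integrable unitM (\<lambda>x. gfun (X i x))" if "i \<in> {2..Suc m}" for i m
    by (rule P.integrable_const_bound[where B=1]) (auto simp: gm[OF that], auto simp: gfun_def)
  have Eg: "(\<integral>x. gfun (X i x) \<partial>unitM) = 15/16" if "i \<in> {2..Suc m}" for i m
  proof -
    have "i = Suc (i - 1)" using that by auto
    then obtain j where j: "i = Suc j" by blast
    have "(\<integral>x. gfun (X i x) \<partial>unitM)
        = (\<integral>x. 1 - (1/2) * indicator {x\<in>space unitM. ln 8 < X i x} x \<partial>unitM)"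
      by (intro Bochner_Integration.integral_cong) (auto simp: gfun_def)
    also have "\<dots> = 1 - (1/2) * P.prob {x\<in>space unitM. ln 8 < X i x}"
      unfolding j by (subst Bochner_Integration.integral_diff) (auto simp: P.prob_space less_top[symmetric] P.emeasure_finite intro!: integrable_divide_zero integrable_real_indicator)
    also have "P.prob {x\<in>space unitM. ln 8 < X i x} = 1/8"
      using P.exponential_distributedD_gt[OF distr[of j], of "ln 8"] unfolding j by (simp add: exp_minus)
    finally show ?thesis by simp
  qed
  have C_le: "measure unitM (C m) \<le> (30/31) ^ m" for m
  proof -
    have indepg: "P.indep_vars (\<lambda>_. borel) (\<lambda>i x. gfun (X i x)) {2..Suc m}"
      by (rule P.indep_vars_compose2[OF P.indep_vars_subset[OF indep]]) auto
    have EP: "(\<integral>x. Pr (Suc m) x \<partial>unitM) = (15/16) ^ m"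
      unfolding Pr_def
    proof (subst P.indep_vars_lebesgue_integral[OF _ indepg intg[of _ m]])
      have "(\<Prod>i\<in>{2..Suc m}. \<integral>x. gfun (X i x) \<partial>unitM) = (\<Prod>i\<in>{2..Suc m}. 15/16)"
        by (rule prod.cong) (simp_all only: Eg[of _ m])
      then show "(\<Prod>i\<in>{2..Suc m}. \<integral>x. gfun (X i x) \<partial>unitM) = (15/16) ^ m" by simp
    qed auto
    have intP: "integrable unitM (Pr (Suc m))"
      unfolding Pr_def by (rule P.indep_vars_integrable[OF _ indepg intg[of _ m]]) auto
    have "measure unitM {x\<in>space unitM. r ^ m \<le> Pr (Suc m) x} \<le> (\<integral>x. Pr (Suc m) x \<partial>unitM) / r ^ m"
      by (rule integral_Markov_inequality_measure[OF intP, where A = "space unitM"])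
         (auto simp: Pr_def gfun_def r_def intro!: prod_nonneg)
    also have "\<dots> = (30/31) ^ m" unfolding EP r_def by (simp add: power_divide[symmetric])
    finally show ?thesis unfolding C_def .
  qed
  have sumB: "summable (\<lambda>m. measure unitM (B m))"
    by (rule summable_comparison_test[where g="\<lambda>m. r ^ m"])
       (use B_le in \<open>auto simp: r_def intro!: summable_geometric\<close>)
  have sumC: "summable (\<lambda>m. measure unitM (C m))"
    by (rule summable_comparison_test[where g="\<lambda>m. (30/31) ^ m"])
       (use C_le in \<open>auto intro!: summable_geometric\<close>)
  have aeB: "AE x in unitM. eventually (\<lambda>m. x \<in> space unitM - B m) sequentially"
    by (rule borel_cantelli_AE1) (auto simp: sumB less_top[symmetric] P.emeasure_finite)
  have aeC: "AE x in unitM. eventually (\<lambda>m. x \<in> space unitM - C m) sequentially"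
    by (rule borel_cantelli_AE1) (auto simp: sumC less_top[symmetric] P.emeasure_finite)
  have aepos: "AE x in unitM. \<forall>i. 0 \<le> X (Suc i) x"
  proof (subst AE_all_countable, intro allI)
    fix i
    have "P.prob {x \<in> space unitM. 0 < X (Suc i) x} = 1"
      using P.exponential_distributedD_gt[OF distr[of i], of 0] by simp
    then have "AE x in unitM. x \<in> {x \<in> space unitM. 0 < X (Suc i) x}" by (rule P.AE_prob_1)
    then show "AE x in unitM. 0 \<le> X (Suc i) x" by eventually_elim auto
  qed
  have "AE x in unitM. \<not> (\<exists>\<^sub>\<infinity>n. n \<ge> 1 \<and> digD X (Suc n) x = digD X n x)"
    using aeB aeC aepos
  proof eventually_elim
    case (elim x)
    have pos: "\<And>i. 0 \<le> X (Suc i) x" using elim(3) by auto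
    have "eventually (\<lambda>m. x \<in> space unitM - B m \<and> x \<in> space unitM - C m) sequentially"
      using elim(1,2) by (rule eventually_conj)
    then obtain N where N: "\<And>m. m \<ge> N \<Longrightarrow> x \<in> space unitM - B m \<and> x \<in> space unitM - C m"
      unfolding eventually_sequentially by blast
    have neq: "digD X (Suc (Suc m)) x \<noteq> digD X (Suc m) x" if "m \<ge> N" for m
    proof
      assume eq: "digD X (Suc (Suc m)) x = digD X (Suc m) x"
      have a: "X (Suc (Suc m)) x < 2 / digD X (Suc m) x" by (rule D_eq[where X=X and x=x, OF pos eq])
      have b: "2 / digD X (Suc m) x \<le> Pr (Suc m) x" unfolding Pr_def by (rule D_prod[where X=X and x=x, OF pos])
      have c: "Pr (Suc m) x < r ^ m" using N[OF that] unfolding C_def by auto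
      have d: "r ^ m < X (Suc (Suc m)) x" using N[OF that] unfolding B_def by auto
      show False using a b c d by linarith
    qed
    show ?case unfolding INFM_nat
    proof
      assume "\<forall>m. \<exists>n>m. 1 \<le> n \<and> digD X (Suc n) x = digD X n x"
      then obtain n where n: "n > N" "digD X (Suc n) x = digD X n x" by blast
      then obtain m where "n = Suc m" by (cases n) auto
      then show False using n neq[of m] by auto
    qed
  qed
  then have "emeasure unitM S = 0"
    by (subst (asm) AE_iff_measurable[OF S_meas]) (auto simp: S_def)
  then show ?thesis using S_meas unfolding S_def by simp
qed

end
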